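(* Let $\Gamma$ be a finite simple graph and let $K_n$ be the complete graph on $n$ vertices. If $\psi\colon A(K_n)\to A(\Gamma)$ is an injective homomorphism satisfying condition (KK), then there is a full embedding $\iota\colon K_n\to\Gamma$ with $\iota(V(K_n))\subset\mathrm{supp}(\psi)$.
   Context: $A(\Gamma) = \langle V(\Gamma) \mid uv=vu \text{ whenever } \{u,v\}\in E(\Gamma)\rangle$ is the right-angled Artin group; $A(K_n)\cong\mathbb{Z}^n$. A graph embedding is an injective vertex map preserving adjacency; it is full if it also preserves non-adjacency. The support $\mathrm{supp}(g)$ of $g\in A(\Gamma)$ is the set of vertices $v$ such that $v$ or $v^{-1}$ occurs in a (equivalently, any) shortest word representing $g$. For a homomorphism $\psi\colon A(\Lambda)\to A(\Gamma)$, $\mathrm{supp}(\psi)=\bigcup_{v\in V(\Lambda)}\mathrm{supp}(\psi(v))$. A homomorphism $\psi$ satisfies condition (KK) if for every $v\in V(\Lambda)$ the set $\mathrm{supp}(\psi(v))$ consists of mutually adjacent vertices of $\Gamma$. *)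

theory Defs
  imports "HOL-Algebra.Group"
begin

definition finite_simple_graph :: "'a set \<Rightarrow> ('a \<Rightarrow> 'a \<Rightarrow> bool) \<Rightarrow> bool" where
  "finite_simple_graph V E \<longleftrightarrow> finite V \<and>
     (\<forall>u v. E u v \<longrightarrow> u \<in> V \<and> v \<in> V \<and> u \<noteq> v \<and> E v u)"

definition Kn_verts :: "nat \<Rightarrow> nat set" where
  "Kn_verts n = {0..<n}"

definition Kn_adj :: "nat \<Rightarrow> nat \<Rightarrow> nat \<Rightarrow> bool" where
  "Kn_adj n i j \<longleftrightarrow> i < n \<and> j < n \<and> i \<noteq> j"

definition graph_embedding ::
  "'b set \<Rightarrow> ('b \<Rightarrow> 'b \<Rightarrow> bool) \<Rightarrow> 'a set \<Rightarrow> ('a \<Rightarrow> 'a \<Rightarrow> bool) \<Rightarrow> ('b \<Rightarrow> 'a) \<Rightarrow> bool" where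
  "graph_embedding V1 E1 V2 E2 f \<longleftrightarrow> inj_on f V1 \<and> f ` V1 \<subseteq> V2 \<and>
     (\<forall>u\<in>V1. \<forall>v\<in>V1. E1 u v \<longrightarrow> E2 (f u) (f v))"

definition full_embedding ::
  "'b set \<Rightarrow> ('b \<Rightarrow> 'b \<Rightarrow> bool) \<Rightarrow> 'a set \<Rightarrow> ('a \<Rightarrow> 'a \<Rightarrow> bool) \<Rightarrow> ('b \<Rightarrow> 'a) \<Rightarrow> bool" where
  "full_embedding V1 E1 V2 E2 f \<longleftrightarrow> graph_embedding V1 E1 V2 E2 f \<and>
     (\<forall>u\<in>V1. \<forall>v\<in>V1. \<not> E1 u v \<longrightarrow> \<not> E2 (f u) (f v))"

text \<open>Words: lists of letters (v, True) = v and (v, False) = v^-1.\<close>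

type_synonym 'a word = "('a \<times> bool) list"

definition words :: "'a set \<Rightarrow> 'a word set" where
  "words V = lists (V \<times> UNIV)"

inductive raag_step :: "'a set \<Rightarrow> ('a \<Rightarrow> 'a \<Rightarrow> bool) \<Rightarrow> 'a word \<Rightarrow> 'a word \<Rightarrow> bool"
  for V E where
  cancel: "v \<in> V \<Longrightarrow> raag_step V E (xs @ [(v, b), (v, \<not> b)] @ ys) (xs @ ys)"
| swap: "E u v \<Longrightarrow> raag_step V E (xs @ [(u, a), (v, b)] @ ys) (xs @ [(v, b), (u, a)] @ ys)"

definition raag_eq :: "'a set \<Rightarrow> ('a \<Rightarrow> 'a \<Rightarrow> bool) \<Rightarrow> 'a word \<Rightarrow> 'a word \<Rightarrow> bool" where
  "raag_eq V E w w' \<longleftrightarrow> w \<in> words V \<and> w' \<in> words V \<and>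
     (\<lambda>x y. raag_step V E x y \<or> raag_step V E y x)\<^sup>*\<^sup>* w w'"

definition raag_class :: "'a set \<Rightarrow> ('a \<Rightarrow> 'a \<Rightarrow> bool) \<Rightarrow> 'a word \<Rightarrow> 'a word set" where
  "raag_class V E w = {w'. raag_eq V E w w'}"

definition raag :: "'a set \<Rightarrow> ('a \<Rightarrow> 'a \<Rightarrow> bool) \<Rightarrow> 'a word set monoid" where
  "raag V E = \<lparr> carrier = raag_class V E ` words V,
                mult = (\<lambda>X Y. raag_class V E ((SOME x. x \<in> X) @ (SOME y. y \<in> Y))),
                one = raag_class V E [] \<rparr>"

definition raag_gen :: "'a set \<Rightarrow> ('a \<Rightarrow> 'a \<Rightarrow> bool) \<Rightarrow> 'a \<Rightarrow> 'a word set" where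
  "raag_gen V E v = raag_class V E [(v, True)]"

definition raag_supp :: "'a word set \<Rightarrow> 'a set" where
  "raag_supp g = (\<Union>w \<in> {w \<in> g. \<forall>w' \<in> g. length w \<le> length w'}. fst ` set w)"

definition hom_supp :: "'b set \<Rightarrow> ('b word set \<Rightarrow> 'a word set) \<Rightarrow> 'b set \<Rightarrow> ('b \<Rightarrow> 'b \<Rightarrow> bool) \<Rightarrow> 'a set" where
  "hom_supp VL psi VL' EL = (\<Union>v \<in> VL. raag_supp (psi (raag_gen VL' EL v)))"

definition cond_KK :: "'b set \<Rightarrow> ('b \<Rightarrow> 'b \<Rightarrow> bool) \<Rightarrow> ('a \<Rightarrow> 'a \<Rightarrow> bool) \<Rightarrow> ('b word set \<Rightarrow> 'a word set) \<Rightarrow> bool" where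
  "cond_KK VL EL E psi \<longleftrightarrow> (\<forall>v \<in> VL. \<forall>x \<in> raag_supp (psi (raag_gen VL EL v)).
      \<forall>y \<in> raag_supp (psi (raag_gen VL EL v)). x \<noteq> y \<longrightarrow> E x y)"

end

theory Submission
  imports Defs
begin

abbreviation RR where "RR V E \<equiv> (\<lambda>x y. raag_step V E x y \<or> raag_step V E y x)"

lemma step_append: "raag_step V E x y \<Longrightarrow> raag_step V E (u@x@w) (u@y@w)"
proof (induction rule: raag_step.induct)
  case (cancel v xs b ys)
  then show ?case using raag_step.cancel[of v V E "u@xs" b "ys@w"] by simp
next
  case (swap u' v xs a b ys)
  then show ?case using raag_step.swap[of E u' v V "u@xs" a b "ys@w"] by simp
qed

lemma RR_append: "(RR V E)\<^sup>*\<^sup>* x y \<Longrightarrow> (RR V E)\<^sup>*\<^sup>* (u@x@w) (u@y@w)"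
proof (induction rule: rtranclp_induct)
  case base then show ?case by simp
next
  case (step y z)
  then show ?case using step_append[of V E y z u w] step_append[of V E z y u w]
    by (metis (no_types, lifting) rtranclp.rtrancl_into_rtrancl)
qed

lemma RR_sym: "(RR V E)\<^sup>*\<^sup>* x y \<Longrightarrow> (RR V E)\<^sup>*\<^sup>* y x"
  by (induction rule: rtranclp_induct) (auto intro: converse_rtranclp_into_rtranclp)

lemma words_append[simp]: "xs @ ys \<in> words V \<longleftrightarrow> xs \<in> words V \<and> ys \<in> words V"
  by (auto simp: words_def)

lemma words_Cons[simp]: "x # ys \<in> words V \<longleftrightarrow> fst x \<in> V \<and> ys \<in> words V"
  by (cases x) (auto simp: words_def)

lemma words_Nil[simp]: "[] \<in> words V" by (simp add: words_def)

lemma words_iff: "w \<in> words V \<longleftrightarrow> fst ` set w \<subseteq> V"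
  by (induction w) auto

lemma eq_refl: "w \<in> words V \<Longrightarrow> raag_eq V E w w"
  by (simp add: raag_eq_def)
lemma eq_sym: "raag_eq V E w w' \<Longrightarrow> raag_eq V E w' w"
  by (auto simp: raag_eq_def intro: RR_sym)
lemma eq_trans: "raag_eq V E w w' \<Longrightarrow> raag_eq V E w' w'' \<Longrightarrow> raag_eq V E w w''"
  by (auto simp: raag_eq_def)
lemma eq_words: "raag_eq V E w w' \<Longrightarrow> w \<in> words V \<and> w' \<in> words V"
  by (auto simp: raag_eq_def)

lemma eq_append: "raag_eq V E w w' \<Longrightarrow> raag_eq V E u u' \<Longrightarrow> raag_eq V E (w@u) (w'@u')"
proof -
  assume a: "raag_eq V E w w'" "raag_eq V E u u'"
  have "(RR V E)\<^sup>*\<^sup>* ([]@w@u) ([]@w'@u)" using a RR_append unfolding raag_eq_def by blast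
  moreover have "(RR V E)\<^sup>*\<^sup>* (w'@u@[]) (w'@u'@[])" using a RR_append unfolding raag_eq_def by blast
  ultimately show ?thesis using a unfolding raag_eq_def by auto
qed

lemma class_eq: "raag_eq V E w w' \<Longrightarrow> raag_class V E w = raag_class V E w'"
  unfolding raag_class_def by (auto intro: eq_trans eq_sym)

lemma in_class: "w \<in> words V \<Longrightarrow> w \<in> raag_class V E w"
  unfolding raag_class_def by (simp add: eq_refl)

lemma class_eqD: "w \<in> words V \<Longrightarrow> raag_class V E w = raag_class V E w' \<Longrightarrow> raag_eq V E w' w"
  using in_class[of w V E] unfolding raag_class_def by auto

lemma mult_class: assumes "x \<in> words V" "y \<in> words V"
  shows "raag_class V E x \<otimes>\<^bsub>raag V E\<^esub> raag_class V E y = raag_class V E (x@y)"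
proof -
  let ?x = "SOME x'. x' \<in> raag_class V E x" and ?y = "SOME y'. y' \<in> raag_class V E y"
  have "?x \<in> raag_class V E x" using in_class[OF assms(1)] by (rule someI)
  moreover have "?y \<in> raag_class V E y" using in_class[OF assms(2)] by (rule someI)
  ultimately have "raag_eq V E (x@y) (?x@?y)" by (auto simp: raag_class_def intro: eq_append)
  then show ?thesis by (simp add: raag_def class_eq)
qed

definition expo :: "'a word \<Rightarrow> 'a \<Rightarrow> int" where
  "expo w v = sum_list (map (\<lambda>p. if fst p = v then (if snd p then 1 else -1) else 0) w)"

lemma expo_Nil[simp]: "expo [] v = 0" by (simp add: expo_def)
lemma expo_Cons[simp]: "expo (p#w) v = (if fst p = v then (if snd p then 1 else -1) else 0) + expo w v"
  by (simp add: expo_def)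
lemma expo_append[simp]: "expo (xs@ys) v = expo xs v + expo ys v"
  by (simp add: expo_def)

lemma expo_step: "raag_step V E x y \<Longrightarrow> expo x = expo y"
  by (induction rule: raag_step.induct) (auto simp: fun_eq_iff)

lemma expo_RR: "(RR V E)\<^sup>*\<^sup>* x y \<Longrightarrow> expo x = expo y"
  by (induction rule: rtranclp_induct) (auto dest: expo_step)

lemma expo_eq: "raag_eq V E x y \<Longrightarrow> expo x = expo y"
  unfolding raag_eq_def using expo_RR by blast

lemma expo_notin: "v \<notin> fst ` set w \<Longrightarrow> expo w v = 0"
  by (induction w) auto

type_synonym m4 = "int \<times> int \<times> int \<times> int"

fun mm :: "m4 \<Rightarrow> m4 \<Rightarrow> m4" where
  "mm (a1,b1,c1,d1) (a2,b2,c2,d2) = (a1*a2+b1*c2, a1*b2+b1*d2, c1*a2+d1*c2, c1*b2+d1*d2)"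

lemma mm_assoc: "mm (mm x y) z = mm x (mm y z)"
  by (cases x; cases y; cases z) (simp add: algebra_simps)
lemma mm_I1[simp]: "mm (1,0,0,1) x = x" by (cases x) simp
lemma mm_I2[simp]: "mm x (1,0,0,1) = x" by (cases x) simp

definition vl :: "'a \<Rightarrow> 'a \<Rightarrow> 'a \<times> bool \<Rightarrow> m4" where
  "vl a b p = (if fst p = a then (if snd p then (1,2,0,1) else (1,-2,0,1))
     else if fst p = b then (if snd p then (1,0,2,1) else (1,0,-2,1)) else (1,0,0,1))"

definition ev :: "'a \<Rightarrow> 'a \<Rightarrow> 'a word \<Rightarrow> m4" where
  "ev a b w = foldr (\<lambda>p acc. mm (vl a b p) acc) w (1,0,0,1)"

lemma ev_Nil[simp]: "ev a b [] = (1,0,0,1)" by (simp add: ev_def)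
lemma ev_Cons[simp]: "ev a b (p#w) = mm (vl a b p) (ev a b w)" by (simp add: ev_def)
lemma ev_append[simp]: "ev a b (xs@ys) = mm (ev a b xs) (ev a b ys)"
  by (induction xs) (auto simp: mm_assoc)

lemma ev_step:
  assumes "a \<noteq> b" "\<not> E a b" "\<not> E b a" "\<And>u. \<not> E u u"
  shows "raag_step V E x y \<Longrightarrow> ev a b x = ev a b y"
proof (induction rule: raag_step.induct)
  case (cancel v xs s ys)
  have "mm (vl a b (v,s)) (vl a b (v, \<not>s)) = (1,0,0,1)"
    by (cases s) (auto simp: vl_def)
  then show ?case by (simp add: mm_assoc[symmetric])
next
  case (swap u v xs s t ys)
  have "mm (vl a b (u,s)) (vl a b (v,t)) = mm (vl a b (v,t)) (vl a b (u,s))"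
    using swap assms by (cases s; cases t) (auto simp: vl_def)
  then show ?case by (simp add: mm_assoc[symmetric])
qed

lemma ev_RR:
  assumes "a \<noteq> b" "\<not> E a b" "\<not> E b a" "\<And>u. \<not> E u u"
  shows "(RR V E)\<^sup>*\<^sup>* x y \<Longrightarrow> ev a b x = ev a b y"
  by (induction rule: rtranclp_induct) (auto dest: ev_step[OF assms])

lemma ev_A: "b \<notin> fst ` set w \<Longrightarrow> a \<noteq> b \<Longrightarrow> ev a b w = (1, 2 * expo w a, 0, 1)"
  by (induction w) (auto simp: vl_def algebra_simps)

lemma ev_B: "a \<notin> fst ` set w \<Longrightarrow> a \<noteq> b \<Longrightarrow> ev a b w = (1, 0, 2 * expo w b, 1)"
  by (induction w) (auto simp: vl_def algebra_simps)

lemma noncomm: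
  assumes "a \<noteq> b" "\<not> E a b" "\<not> E b a" "\<And>u. \<not> E u u"
    and "raag_eq V E (x@y) (y@x)" "b \<notin> fst ` set x" "a \<notin> fst ` set y"
  shows "expo x a = 0 \<or> expo y b = 0"
proof -
  have "ev a b (x@y) = ev a b (y@x)" using assms(5) ev_RR[OF assms(1-4)] unfolding raag_eq_def by blast
  then show ?thesis using ev_A[OF assms(6,1)] ev_B[OF assms(7,1)] by (simp add: algebra_simps)
qed

lemma move:
  assumes "\<forall>y\<in>set ys. E (fst y) a"
  shows "(raag_step V E)\<^sup>*\<^sup>* (xs@ys@[(a,t)]@zs) (xs@[(a,t)]@ys@zs)"
  using assms
proof (induction ys arbitrary: zs rule: rev_induct)
  case Nil then show ?case by simp
next
  case (snoc y ys)
  obtain u s where y: "y = (u,s)" by (cases y)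
  have Eu: "E u a" using snoc.prems y by simp
  have 1: "raag_step V E (xs@(ys@[y])@[(a,t)]@zs) (xs@ys@[(a,t)]@(y#zs))"
    using raag_step.swap[where xs="xs@ys" and a=s and b=t and ys=zs and u=u and v=a and E=E and V=V, OF Eu] y by simp
  have 2: "(raag_step V E)\<^sup>*\<^sup>* (xs@ys@[(a,t)]@(y#zs)) (xs@[(a,t)]@ys@(y#zs))"
    using snoc.IH[of "y#zs"] snoc.prems by simp
  have e: "xs@[(a,t)]@(ys@[y])@zs = xs@[(a,t)]@ys@(y#zs)" by simp
  show ?case unfolding e by (rule converse_rtranclp_into_rtranclp[OF 1 2])
qed

lemma step_set: "raag_step V E x y \<Longrightarrow> set y \<subseteq> set x"
  by (induction rule: raag_step.induct) auto

lemma steps_set: "(raag_step V E)\<^sup>*\<^sup>* x y \<Longrightarrow> set y \<subseteq> set x"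
  by (induction rule: rtranclp_induct) (auto dest: step_set)

lemma steps_RR: "(raag_step V E)\<^sup>*\<^sup>* x y \<Longrightarrow> (RR V E)\<^sup>*\<^sup>* x y"
proof -
  assume a: "(raag_step V E)\<^sup>*\<^sup>* x y"
  have "raag_step V E \<le> RR V E" by auto
  then have "(raag_step V E)\<^sup>*\<^sup>* \<le> (RR V E)\<^sup>*\<^sup>*" by (rule rtranclp_mono)
  then show ?thesis using a by (rule predicate2D)
qed

lemma steps_eq: "(raag_step V E)\<^sup>*\<^sup>* x y \<Longrightarrow> x \<in> words V \<Longrightarrow> raag_eq V E x y"
proof -
  assume a: "(raag_step V E)\<^sup>*\<^sup>* x y" "x \<in> words V"
  have "set y \<subseteq> set x" using a(1) by (rule steps_set)
  then have y: "y \<in> words V" using a(2) by (auto simp: words_def)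
  show ?thesis unfolding raag_eq_def using a(2) y steps_RR[OF a(1)] by simp
qed

lemma red:
  assumes "\<forall>p\<in>set (xs@(a,s)#rest). \<forall>q\<in>set (xs@(a,s)#rest). fst p \<noteq> fst q \<longrightarrow> E (fst p) (fst q)"
    and "a \<in> V" and "(a, \<not>s) \<in> set rest"
  shows "\<exists>w'. (raag_step V E)\<^sup>*\<^sup>* (xs@(a,s)#rest) w' \<and> length w' + 2 = length (xs@(a,s)#rest)"
  using assms
proof (induction "length rest" arbitrary: xs rest rule: less_induct)
  case less
  have "\<exists>p\<in>set rest. fst p = a" using less.prems(3) by force
  then obtain ys p zs where sp: "rest = ys @ p # zs" "fst p = a" "\<forall>y\<in>set ys. fst y \<noteq> a"
    using split_list_first_prop[of rest "\<lambda>p. fst p = a"] by blast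
  show ?case
  proof (cases "snd p = (\<not>s)")
    case True
    then have p: "p = (a, \<not>s)" using sp by (cases p) auto
    have adj: "\<forall>y\<in>set ys. E (fst y) a"
      using less.prems(1) sp by auto
    have 1: "(raag_step V E)\<^sup>*\<^sup>* ((xs@[(a,s)])@ys@[(a,\<not>s)]@zs) ((xs@[(a,s)])@[(a,\<not>s)]@ys@zs)"
      using adj by (rule move)
    have 2: "raag_step V E ((xs@[(a,s)])@[(a,\<not>s)]@ys@zs) (xs@ys@zs)"
      using raag_step.cancel[where v=a and V=V and E=E and xs=xs and b=s and ys="ys@zs"] less.prems(2) by simp
    have "(raag_step V E)\<^sup>*\<^sup>* (xs@(a,s)#rest) (xs@ys@zs)"
      using rtranclp.rtrancl_into_rtrancl[OF 1 2] sp p by simp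
    then show ?thesis using sp by auto
  next
    case False
    then have p: "p = (a, s)" using sp by (cases p) auto
    have "(a, \<not>s) \<in> set zs" using less.prems(3) sp p by auto
    moreover have "length zs < length rest" using sp by simp
    moreover have "xs@(a,s)#rest = (xs@(a,s)#ys)@(a,s)#zs" using sp p by simp
    ultimately show ?thesis using less.hyps[of zs "xs@(a,s)#ys"] less.prems by metis
  qed
qed

lemma expo_consistent:
  "(\<forall>p\<in>set w. fst p = a \<longrightarrow> snd p = s) \<Longrightarrow>
   (if s then expo w a else - expo w a) = int (length (filter (\<lambda>p. fst p = a) w))"
  by (induction w) auto

lemma expo_nz:
  assumes "\<not> ((a,True) \<in> set w \<and> (a,False) \<in> set w)" "a \<in> fst ` set w"
  shows "expo w a \<noteq> 0"
proof -
  have "\<exists>s. \<forall>p\<in>set w. fst p = a \<longrightarrow> snd p = s"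
  proof (cases "(a,True) \<in> set w")
    case True
    then have "(a,False) \<notin> set w" using assms(1) by blast
    then show ?thesis by (intro exI[of _ True] ballI impI) (metis (full_types) prod.collapse)
  next
    case False
    then show ?thesis by (intro exI[of _ False] ballI impI) (metis (full_types) prod.collapse)
  qed
  then obtain s where s: "\<forall>p\<in>set w. fst p = a \<longrightarrow> snd p = s" by blast
  have "filter (\<lambda>p. fst p = a) w \<noteq> []" using assms(2) by (force simp: filter_empty_conv)
  then have "length (filter (\<lambda>p. fst p = a) w) > 0" by simp
  then show ?thesis using expo_consistent[OF s] by (cases s) auto
qed

lemma minimal_consistent:
  assumes "w \<in> words V" "\<forall>w'. raag_eq V E w w' \<longrightarrow> length w \<le> length w'"
    and "\<forall>x\<in>fst ` set w. \<forall>y\<in>fst ` set w. x \<noteq> y \<longrightarrow> E x y"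
  shows "\<not> ((a,True) \<in> set w \<and> (a,False) \<in> set w)"
proof
  assume both: "(a,True) \<in> set w \<and> (a,False) \<in> set w"
  have "\<exists>p\<in>set w. fst p = a" using both by force
  then obtain xs p rest where sp: "w = xs @ p # rest" "fst p = a" "\<forall>y\<in>set xs. fst y \<noteq> a"
    using split_list_first_prop[of w "\<lambda>p. fst p = a"] by blast
  obtain s where p: "p = (a,s)" using sp by (cases p) auto
  have "(a, \<not>s) \<in> set rest" using both sp p by (cases s) auto
  moreover have "a \<in> V" using assms(1) both by (auto simp: words_iff)
  moreover have "\<forall>p\<in>set (xs@(a,s)#rest). \<forall>q\<in>set (xs@(a,s)#rest). fst p \<noteq> fst q \<longrightarrow> E (fst p) (fst q)"
    using assms(3) sp p by auto
  ultimately obtain w' where "(raag_step V E)\<^sup>*\<^sup>* w w'" "length w' + 2 = length w"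
    using red[of xs a s rest E V] sp p by auto
  moreover then have "raag_eq V E w w'" using steps_eq assms(1) by blast
  ultimately show False using assms(2) by fastforce
qed

lemma split_both:
  assumes "(a,True) \<in> set w" "(a,False) \<in> set w"
  shows "\<exists>xs s rest. w = xs@(a,s)#rest \<and> (a,\<not>s) \<in> set rest"
proof -
  have "\<exists>p\<in>set w. fst p = a" using assms by force
  then obtain xs p rest where sp: "w = xs @ p # rest" "fst p = a" "\<forall>y\<in>set xs. fst y \<noteq> a"
    using split_list_first_prop[of w "\<lambda>p. fst p = a"] by blast
  obtain s where p: "p = (a,s)" using sp by (cases p) auto
  have "(a, \<not>s) \<in> set rest" using assms sp p by (cases s) auto
  then show ?thesis using sp p by blast
qed

lemma expo_sign:
  assumes "(a,s) \<in> set w" "(a,\<not>s) \<notin> set w"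
  shows "(if s then expo w a else - expo w a) > 0"
proof -
  have c: "\<forall>p\<in>set w. fst p = a \<longrightarrow> snd p = s"
  proof (intro ballI impI)
    fix p assume "p \<in> set w" "fst p = a"
    moreover obtain u t where pp: "p = (u,t)" by (cases p)
    ultimately have "(a,t) \<in> set w" by simp
    then show "snd p = s" using assms(2) pp by (cases t; cases s) auto
  qed
  have "filter (\<lambda>p. fst p = a) w \<noteq> []" using assms(1) by (force simp: filter_empty_conv)
  then show ?thesis using expo_consistent[OF c] by simp
qed

lemma expo_sign0:
  assumes "(a,s) \<notin> set w"
  shows "(if s then expo w a else - expo w a) \<le> 0"
proof -
  have c: "\<forall>p\<in>set w. fst p = a \<longrightarrow> snd p = (\<not>s)"
  proof (intro ballI impI)
    fix p assume "p \<in> set w" "fst p = a"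
    moreover obtain u t where pp: "p = (u,t)" by (cases p)
    ultimately have "(a,t) \<in> set w" by simp
    then show "snd p = (\<not>s)" using assms pp by (cases t; cases s) auto
  qed
  show ?thesis using expo_consistent[OF c] by (cases s) auto
qed

lemma clique_of:
  assumes "fst ` set w \<subseteq> C" "\<forall>x\<in>C. \<forall>y\<in>C. x \<noteq> y \<longrightarrow> E x y"
  shows "\<forall>x\<in>set w. \<forall>y\<in>set w. fst x \<noteq> fst y \<longrightarrow> E (fst x) (fst y)"
proof (intro ballI impI)
  fix x y assume "x \<in> set w" "y \<in> set w" "fst x \<noteq> fst y"
  moreover then have "fst x \<in> C" "fst y \<in> C" using assms(1) by auto
  ultimately show "E (fst x) (fst y)" using assms(2) by blast
qed

lemma clique_eq:
  assumes C: "\<forall>x\<in>C. \<forall>y\<in>C. x \<noteq> y \<longrightarrow> E x y" and CV: "C \<subseteq> V"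
  shows "fst ` set p \<subseteq> C \<Longrightarrow> fst ` set q \<subseteq> C \<Longrightarrow> expo p = expo q \<Longrightarrow> raag_eq V E p q"
proof (induction "length p + length q" arbitrary: p q rule: less_induct)
  case less
  have pw: "p \<in> words V" "q \<in> words V" using less.prems CV by (auto simp: words_iff)
  show ?case
  proof (cases "\<exists>a. (a,True) \<in> set p \<and> (a,False) \<in> set p")
    case True
    then obtain a where "(a,True) \<in> set p" "(a,False) \<in> set p" by blast
    then obtain xs s rest where sp: "p = xs@(a,s)#rest" "(a,\<not>s) \<in> set rest"
      using split_both[of a p] by blast
    have "(a,s) \<in> set p" using sp by simp
    then have aV: "a \<in> V" using pw(1) unfolding words_iff by force
    have cl: "\<forall>x\<in>set (xs@(a,s)#rest). \<forall>y\<in>set (xs@(a,s)#rest). fst x \<noteq> fst y \<longrightarrow> E (fst x) (fst y)"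
      using clique_of[OF less.prems(1) C] unfolding sp(1) .
    obtain p' where p': "(raag_step V E)\<^sup>*\<^sup>* p p'" "length p' + 2 = length p"
      using red[OF cl aV sp(2)] sp by auto
    have "set p' \<subseteq> set p" using p'(1) by (rule steps_set)
    then have l: "fst ` set p' \<subseteq> C" using less.prems(1) by auto
    have e: "expo p' = expo q" using expo_RR[OF steps_RR[OF p'(1)]] less.prems(3) by simp
    have "raag_eq V E p' q" using less.hyps[of p' q] p'(2) l less.prems(2) e by simp
    moreover have "raag_eq V E p p'" using steps_eq[OF p'(1) pw(1)] .
    ultimately show ?thesis by (rule eq_trans[rotated])
  next
    case pcons: False
    show ?thesis
    proof (cases "\<exists>a. (a,True) \<in> set q \<and> (a,False) \<in> set q")
      case True
      then obtain a where "(a,True) \<in> set q" "(a,False) \<in> set q" by blast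
      then obtain xs s rest where sp: "q = xs@(a,s)#rest" "(a,\<not>s) \<in> set rest"
        using split_both[of a q] by blast
      have "(a,s) \<in> set q" using sp by simp
      then have aV: "a \<in> V" using pw(2) unfolding words_iff by force
      have cl: "\<forall>x\<in>set (xs@(a,s)#rest). \<forall>y\<in>set (xs@(a,s)#rest). fst x \<noteq> fst y \<longrightarrow> E (fst x) (fst y)"
        using clique_of[OF less.prems(2) C] unfolding sp(1) .
      obtain q' where q': "(raag_step V E)\<^sup>*\<^sup>* q q'" "length q' + 2 = length q"
        using red[OF cl aV sp(2)] sp by auto
      have "set q' \<subseteq> set q" using q'(1) by (rule steps_set)
      then have l: "fst ` set q' \<subseteq> C" using less.prems(2) by auto
      have e: "expo p = expo q'" using expo_RR[OF steps_RR[OF q'(1)]] less.prems(3) by simp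
      have "raag_eq V E p q'" using less.hyps[of p q'] q'(2) l less.prems(1) e by simp
      moreover have "raag_eq V E q' q" using eq_sym[OF steps_eq[OF q'(1) pw(2)]] .
      ultimately show ?thesis by (rule eq_trans)
    next
      case qcons: False
      show ?thesis
      proof (cases p)
        case Nil
        have "q = []"
        proof (rule ccontr)
          assume "q \<noteq> []"
          then obtain x q' where q: "q = x # q'" by (cases q) auto
          have "expo q (fst x) \<noteq> 0" using expo_nz[of "fst x" q] qcons q by auto
          moreover have "expo q (fst x) = expo p (fst x)" using less.prems(3) by simp
          ultimately show False using Nil by simp
        qed
        then show ?thesis using Nil by (simp add: eq_refl)
      next
        case (Cons x p')
        obtain a s where x: "x = (a,s)" by (cases x)
        have nps: "(a, \<not>s) \<notin> set p" using pcons Cons x by (cases s) auto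
        have pos: "(if s then expo p a else - expo p a) > 0" using expo_sign[of a s p] nps Cons x by simp
        have inq: "(a,s) \<in> set q"
        proof (rule ccontr)
          assume "(a,s) \<notin> set q"
          then have "(if s then expo q a else - expo q a) \<le> 0" by (rule expo_sign0)
          moreover have "expo p a = expo q a" using less.prems(3) by simp
          ultimately show False using pos by (cases s) auto
        qed
        have "\<exists>y\<in>set q. fst y = a" using inq by force
        then obtain ys y zs where sq: "q = ys @ y # zs" "fst y = a" "\<forall>u\<in>set ys. fst u \<noteq> a"
          using split_list_first_prop[of q "\<lambda>p. fst p = a"] by blast
        have y: "y = (a,s)"
        proof (rule ccontr)
          assume "y \<noteq> (a,s)"
          then have "y = (a, \<not>s)" using sq(2) by (cases y) auto
          then show False using qcons inq sq(1) by (cases s) auto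
        qed
        have aC: "a \<in> C" using less.prems(1) Cons x by auto
        have adj: "\<forall>u\<in>set ys. E (fst u) a" using sq less.prems(2) C aC by auto
        have mv: "(raag_step V E)\<^sup>*\<^sup>* ([]@ys@[(a,s)]@zs) ([]@[(a,s)]@ys@zs)"
          using adj by (rule move)
        have q1: "raag_eq V E q ((a,s)#ys@zs)" using steps_eq[OF mv] pw(2) sq y by simp
        have e: "expo p' = expo (ys@zs)"
        proof
          fix v show "expo p' v = expo (ys@zs) v"
            using fun_cong[OF less.prems(3), of v] Cons x sq y by simp
        qed
        have l1: "fst ` set p' \<subseteq> C" using less.prems(1) Cons by auto
        have l2: "fst ` set (ys@zs) \<subseteq> C" using less.prems(2) sq by auto
        have "raag_eq V E p' (ys@zs)" using less.hyps[of p' "ys@zs"] l1 l2 e Cons sq by simp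
        then have "raag_eq V E ([(a,s)]@p') ([(a,s)]@ys@zs)"
        proof -
          have "[(a,s)] \<in> words V" using aC CV by auto
          then have "raag_eq V E [(a,s)] [(a,s)]" by (rule eq_refl)
          then show ?thesis using eq_append \<open>raag_eq V E p' (ys@zs)\<close> by blast
        qed
        then have "raag_eq V E p ((a,s)#ys@zs)" using Cons x by simp
        then show ?thesis using eq_sym[OF q1] by (rule eq_trans)
      qed
    qed
  qed
qed

lemma dep:
  fixes f :: "'i \<Rightarrow> 'a \<Rightarrow> int"
  assumes "finite J"
  shows "finite I \<Longrightarrow> card J < card I \<Longrightarrow> \<forall>i\<in>I. \<forall>j. j \<notin> J \<longrightarrow> f i j = 0 \<Longrightarrow>
    \<exists>c. (\<exists>i\<in>I. c i \<noteq> 0) \<and> (\<forall>j. (\<Sum>i\<in>I. c i * f i j) = 0)"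
  using assms
proof (induction J arbitrary: I f rule: finite_induct)
  case empty
  then have "I \<noteq> {}" by auto
  then show ?case using empty by (intro exI[of _ "\<lambda>_. 1"]) auto
next
  case (insert a J)
  show ?case
  proof (cases "\<forall>i\<in>I. f i a = 0")
    case True
    have "\<forall>i\<in>I. \<forall>j. j \<notin> J \<longrightarrow> f i j = 0" using True insert.prems by (metis insert_iff)
    moreover have "card J < card I" using insert by simp
    ultimately show ?thesis using insert.IH insert.prems(1) by blast
  next
    case False
    then obtain k where k: "k \<in> I" "f k a \<noteq> 0" by blast
    define I' where "I' = I - {k}"
    define g where "g i j = f k a * f i j - f i a * f k j" for i j
    have fI': "finite I'" using insert.prems(1) by (simp add: I'_def)
    have cI': "card J < card I'" using insert k by (simp add: I'_def)
    have gz: "\<forall>i\<in>I'. \<forall>j. j \<notin> J \<longrightarrow> g i j = 0"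
    proof (intro ballI allI impI)
      fix i j assume i: "i \<in> I'" and j: "j \<notin> J"
      show "g i j = 0"
      proof (cases "j = a")
        case True then show ?thesis by (simp add: g_def)
      next
        case False
        then have "j \<notin> insert a J" using j by simp
        then show ?thesis using insert.prems(3) k(1) i by (simp add: g_def I'_def)
      qed
    qed
    obtain d where d: "\<exists>i\<in>I'. d i \<noteq> 0" "\<forall>j. (\<Sum>i\<in>I'. d i * g i j) = 0"
      using insert.IH[OF fI' cI' gz] by blast
    define c where "c i = (if i = k then - (\<Sum>i\<in>I'. d i * f i a) else d i * f k a)" for i
    have "\<forall>j. (\<Sum>i\<in>I. c i * f i j) = 0"
    proof
      fix j
      have "(\<Sum>i\<in>I. c i * f i j) = c k * f k j + (\<Sum>i\<in>I'. c i * f i j)"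
        using sum.remove[OF insert.prems(1) k(1)] I'_def by simp
      also have "(\<Sum>i\<in>I'. c i * f i j) = (\<Sum>i\<in>I'. f k a * (d i * f i j))"
        by (rule sum.cong) (auto simp: c_def I'_def)
      also have "c k * f k j = - (\<Sum>i\<in>I'. f k j * (d i * f i a))"
        by (simp add: c_def sum_distrib_left algebra_simps)
      finally have "(\<Sum>i\<in>I. c i * f i j) = (\<Sum>i\<in>I'. f k a * (d i * f i j)) - (\<Sum>i\<in>I'. f k j * (d i * f i a))"
        by simp
      also have "\<dots> = (\<Sum>i\<in>I'. d i * g i j)"
        by (simp add: g_def sum_subtractf[symmetric] algebra_simps)
      finally show "(\<Sum>i\<in>I. c i * f i j) = 0" using d(2) by simp
    qed
    moreover have "\<exists>i\<in>I. c i \<noteq> 0"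
      using d(1) k(2) by (auto simp: c_def I'_def)
    ultimately show ?thesis by blast
  qed
qed

lemma exists_min: "(X :: 'b list set) \<noteq> {} \<Longrightarrow> \<exists>w\<in>X. \<forall>w'\<in>X. length w \<le> length w'"
proof -
  assume "X \<noteq> {}"
  then obtain x where "x \<in> X" by blast
  then show ?thesis using ex_has_least_nat[of "\<lambda>w. w \<in> X" x length] by blast
qed

lemma expo_concat: "expo (concat ls) v = sum_list (map (\<lambda>l. expo l v) ls)"
  by (induction ls) auto

lemma expo_replicate: "expo (replicate k (j,True)) i = (if j = i then int k else 0)"
  by (induction k) auto

lemma sum_list_map_concat: "sum_list (map f (concat xss)) = sum_list (map (\<lambda>xs. sum_list (map f xs)) xss)"
  by (induction xss) auto

definition pK :: "nat \<Rightarrow> (nat \<Rightarrow> nat) \<Rightarrow> nat word" where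
  "pK n d = (0,True) # concat (map (\<lambda>i. replicate (d i) (i,True)) [0..<n])"

lemma pK_pos: "0 < n \<Longrightarrow> x \<in> set (pK n d) \<Longrightarrow> snd x \<and> fst x < n"
  by (auto simp: pK_def)

lemma pK_words: "0 < n \<Longrightarrow> pK n d \<in> words {0..<n}"
  unfolding words_iff
proof
  fix v assume n: "0 < n" and "v \<in> fst ` set (pK n d)"
  then obtain x where x: "x \<in> set (pK n d)" "v = fst x" by blast
  then show "v \<in> {0..<n}" using pK_pos[OF n x(1)] by simp
qed

lemma pK_nonempty: "pK n d \<noteq> []" by (simp add: pK_def)

lemma expo_pK: "i < n \<Longrightarrow> expo (pK n d) i = (if i = 0 then 1 else 0) + int (d i)"
proof -
  assume i: "i < n"
  have "expo (concat (map (\<lambda>i. replicate (d i) (i,True)) [0..<n])) i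
      = sum_list (map (\<lambda>j. if j = i then int (d j) else 0) [0..<n])"
    by (simp add: expo_concat expo_replicate comp_def)
  also have "\<dots> = (\<Sum>j\<in>{0..<n}. if j = i then int (d j) else 0)"
    by (simp add: interv_sum_list_conv_sum_set_nat)
  also have "\<dots> = int (d i)" using i by simp
  finally show ?thesis by (simp add: pK_def)
qed

lemma expo_P: "expo (concat (map (\<lambda>x. W (fst x)) (pK n d))) v
   = expo (W 0) v + (\<Sum>i\<in>{0..<n}. int (d i) * expo (W i) v)"
proof -
  have "expo (concat (map (\<lambda>x. W (fst x)) (pK n d))) v
      = sum_list (map (\<lambda>x. expo (W (fst x)) v) (pK n d))"
    by (simp add: expo_concat comp_def)
  also have "\<dots> = expo (W 0) v + sum_list (map (\<lambda>i. int (d i) * expo (W i) v) [0..<n])"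
    by (simp add: pK_def sum_list_map_concat comp_def sum_list_replicate)
  also have "\<dots> = expo (W 0) v + (\<Sum>i\<in>{0..<n}. int (d i) * expo (W i) v)"
    by (simp add: interv_sum_list_conv_sum_set_nat)
  finally show ?thesis .
qed

lemma set_P: "0 < n \<Longrightarrow> fst ` set (concat (map (\<lambda>x. W (fst x)) (pK n d))) \<subseteq> (\<Union>i\<in>{0..<n}. fst ` set (W i))"
proof
  fix v assume n: "0 < n" and "v \<in> fst ` set (concat (map (\<lambda>x. W (fst x)) (pK n d)))"
  then obtain y where y: "y \<in> set (concat (map (\<lambda>x. W (fst x)) (pK n d)))" "v = fst y" by blast
  then obtain x where x: "x \<in> set (pK n d)" "y \<in> set (W (fst x))" by auto
  have "fst x \<in> {0..<n}" using pK_pos[OF n x(1)] by simp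
  then show "v \<in> (\<Union>i\<in>{0..<n}. fst ` set (W i))" using x(2) y(2) by blast
qed

theorem lemma3p4:
  fixes V :: "'a set" and E :: "'a \<Rightarrow> 'a \<Rightarrow> bool" and n :: nat
    and psi :: "nat word set \<Rightarrow> 'a word set"
  assumes "finite_simple_graph V E"
    and "psi \<in> hom (raag (Kn_verts n) (Kn_adj n)) (raag V E)"
    and "inj_on psi (carrier (raag (Kn_verts n) (Kn_adj n)))"
    and "cond_KK (Kn_verts n) (Kn_adj n) E psi"
  shows "\<exists>iota. full_embedding (Kn_verts n) (Kn_adj n) V E iota \<and>
           iota ` Kn_verts n \<subseteq> hom_supp (Kn_verts n) psi (Kn_verts n) (Kn_adj n)"
proof -
  let ?VK = "Kn_verts n" and ?EK = "Kn_adj n"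
  let ?K = "raag ?VK ?EK" and ?G = "raag V E"
  let ?g = "\<lambda>i. psi (raag_gen ?VK ?EK i)"
  have VK: "?VK = {0..<n}" by (simp add: Kn_verts_def)
  have finV: "finite V" using assms(1) by (simp add: finite_simple_graph_def)
  have Esym: "\<And>u v. E u v \<Longrightarrow> E v u" and Eirr: "\<And>u. \<not> E u u" and EV: "\<And>u v. E u v \<Longrightarrow> u \<in> V"
    using assms(1) unfolding finite_simple_graph_def by blast+
  have psi_car: "\<And>x. x \<in> carrier ?K \<Longrightarrow> psi x \<in> carrier ?G"
    using assms(2) by (rule hom_in_carrier)
  have psi_mult: "\<And>x y. x \<in> carrier ?K \<Longrightarrow> y \<in> carrier ?K \<Longrightarrow> psi (x \<otimes>\<^bsub>?K\<^esub> y) = psi x \<otimes>\<^bsub>?G\<^esub> psi y"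
    using assms(2) unfolding hom_def by blast
  have carK: "\<And>p. p \<in> words ?VK \<Longrightarrow> raag_class ?VK ?EK p \<in> carrier ?K"
    by (simp add: raag_def)
  have genw: "\<And>i. i < n \<Longrightarrow> [(i,True)] \<in> words ?VK" by (simp add: VK)
  have gen_car: "\<And>i. i < n \<Longrightarrow> raag_gen ?VK ?EK i \<in> carrier ?K"
    unfolding raag_gen_def using carK genw by blast
  define w where "w i = (SOME w. w \<in> ?g i \<and> (\<forall>w'\<in>?g i. length w \<le> length w'))" for i
  have wprops: "w i \<in> words V" "?g i = raag_class V E (w i)"
      "\<forall>w'. raag_eq V E (w i) w' \<longrightarrow> length (w i) \<le> length w'"
      "fst ` set (w i) \<subseteq> raag_supp (?g i)" if i: "i < n" for i
  proof -
    have "?g i \<in> carrier ?G" using psi_car gen_car i by blast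
    then obtain u where u: "u \<in> words V" "?g i = raag_class V E u" by (auto simp: raag_def)
    then have "?g i \<noteq> {}" using in_class by blast
    then have ex: "\<exists>w. w \<in> ?g i \<and> (\<forall>w'\<in>?g i. length w \<le> length w')" using exists_min by blast
    have w1: "w i \<in> ?g i" and w2: "\<forall>w'\<in>?g i. length (w i) \<le> length w'"
      using someI_ex[OF ex] unfolding w_def by blast+
    have e: "raag_eq V E u (w i)" using w1 u by (simp add: raag_class_def)
    have w3: "w i \<in> words V" using eq_words[OF e] by blast
    have w4: "?g i = raag_class V E (w i)" using u(2) class_eq[OF e] by simp
    have w5: "\<forall>w'. raag_eq V E (w i) w' \<longrightarrow> length (w i) \<le> length w'"
      using w2 w4 by (simp add: raag_class_def)
    have w6: "fst ` set (w i) \<subseteq> raag_supp (?g i)"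
      unfolding raag_supp_def using w1 w2 by blast
    show "w i \<in> words V" by (fact w3)
    show "?g i = raag_class V E (w i)" by (fact w4)
    show "\<forall>w'. raag_eq V E (w i) w' \<longrightarrow> length (w i) \<le> length w'" by (fact w5)
    show "fst ` set (w i) \<subseteq> raag_supp (?g i)" by (fact w6)
  qed
  have KK: "\<And>i x y. i < n \<Longrightarrow> x \<in> fst ` set (w i) \<Longrightarrow> y \<in> fst ` set (w i) \<Longrightarrow> x \<noteq> y \<Longrightarrow> E x y"
  proof -
    fix i x y assume i: "i < n" and xy: "x \<in> fst ` set (w i)" "y \<in> fst ` set (w i)" "x \<noteq> y"
    have "x \<in> raag_supp (?g i)" "y \<in> raag_supp (?g i)" using wprops(4)[OF i] xy by blast+
    moreover have "i \<in> ?VK" using i VK by simp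
    ultimately show "E x y" using assms(4) xy(3) unfolding cond_KK_def by blast
  qed
  have nz: "\<And>i a. i < n \<Longrightarrow> a \<in> fst ` set (w i) \<Longrightarrow> expo (w i) a \<noteq> 0"
  proof -
    fix i a assume i: "i < n" and a: "a \<in> fst ` set (w i)"
    have wi: "w i \<in> words V" "\<forall>w'. raag_eq V E (w i) w' \<longrightarrow> length (w i) \<le> length w'"
      using wprops(1,3)[OF i] by auto
    have cl: "\<forall>x\<in>fst ` set (w i). \<forall>y\<in>fst ` set (w i). x \<noteq> y \<longrightarrow> E x y"
      by (intro ballI impI, rule KK[OF i], assumption+)
    have "\<not> ((a,True) \<in> set (w i) \<and> (a,False) \<in> set (w i))"
      by (rule minimal_consistent[OF wi cl])
    then show "expo (w i) a \<noteq> 0" by (rule expo_nz[OF _ a])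
  qed
  have comm: "raag_eq V E (w i @ w j) (w j @ w i)" if i: "i < n" and j: "j < n" for i j
  proof (cases "i = j")
    case True
    then show ?thesis using wprops(1)[OF i] by (simp add: eq_refl)
  next
    case False
    have st: "raag_step ?VK ?EK ([]@[(i,True),(j,True)]@[]) ([]@[(j,True),(i,True)]@[])"
      by (rule raag_step.swap) (simp add: Kn_adj_def i j False)
    have "raag_eq ?VK ?EK [(i,True),(j,True)] [(j,True),(i,True)]"
    proof -
      have "(RR ?VK ?EK)\<^sup>*\<^sup>* [(i,True),(j,True)] [(j,True),(i,True)]"
        using st by (intro r_into_rtranclp) simp
      moreover have "[(i,True),(j,True)] \<in> words ?VK" "[(j,True),(i,True)] \<in> words ?VK"
        using genw[OF i] genw[OF j] by simp_all
      ultimately show ?thesis unfolding raag_eq_def by blast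
    qed
    then have "raag_class ?VK ?EK [(i,True),(j,True)] = raag_class ?VK ?EK [(j,True),(i,True)]"
      by (rule class_eq)
    then have "raag_gen ?VK ?EK i \<otimes>\<^bsub>?K\<^esub> raag_gen ?VK ?EK j = raag_gen ?VK ?EK j \<otimes>\<^bsub>?K\<^esub> raag_gen ?VK ?EK i"
      unfolding raag_gen_def using mult_class[OF genw[OF i] genw[OF j]] mult_class[OF genw[OF j] genw[OF i]] by simp
    then have "?g i \<otimes>\<^bsub>?G\<^esub> ?g j = ?g j \<otimes>\<^bsub>?G\<^esub> ?g i"
      using psi_mult[OF gen_car[OF i] gen_car[OF j]] psi_mult[OF gen_car[OF j] gen_car[OF i]] by simp
    then have "raag_class V E (w i @ w j) = raag_class V E (w j @ w i)"
      using wprops(1,2)[OF i] wprops(1,2)[OF j] mult_class[of "w i" V "w j" E] mult_class[of "w j" V "w i" E] by simp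
    moreover have "w i @ w j \<in> words V" using wprops(1)[OF i] wprops(1)[OF j] by simp
    ultimately have "raag_eq V E (w j @ w i) (w i @ w j)" using class_eqD by metis
    then show ?thesis by (rule eq_sym)
  qed
  define U where "U = (\<Union>i\<in>{0..<n}. fst ` set (w i))"
  have UV: "U \<subseteq> V"
  proof
    fix v assume "v \<in> U"
    then obtain i where i: "i < n" "v \<in> fst ` set (w i)" unfolding U_def by (metis UN_E atLeastLessThan_iff)
    have "w i \<in> words V" using wprops(1)[OF i(1)] by blast
    then show "v \<in> V" using i(2) unfolding words_iff by blast
  qed
  have finU: "finite U" using finite_subset[OF UV finV] .
  have clique: "\<forall>a\<in>U. \<forall>b\<in>U. a \<noteq> b \<longrightarrow> E a b"
  proof (intro ballI impI)
    fix a b assume aU: "a \<in> U" and bU: "b \<in> U" and ab: "a \<noteq> b"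
    obtain i where i: "i < n" "a \<in> fst ` set (w i)" using aU unfolding U_def by (metis UN_E atLeastLessThan_iff)
    obtain j where j: "j < n" "b \<in> fst ` set (w j)" using bU unfolding U_def by (metis UN_E atLeastLessThan_iff)
    show "E a b"
    proof (cases "b \<in> fst ` set (w i)")
      case True show ?thesis by (rule KK[OF i(1) i(2) True ab])
    next
      case bi: False
      show ?thesis
      proof (cases "a \<in> fst ` set (w j)")
        case True show ?thesis by (rule KK[OF j(1) True j(2) ab])
      next
        case aj: False
        show ?thesis
        proof (rule ccontr)
          assume nab: "\<not> E a b"
          then have nba: "\<not> E b a" using Esym by blast
          have "expo (w i) a = 0 \<or> expo (w j) b = 0"
            using noncomm[OF ab nab nba Eirr comm[OF i(1) j(1)] bi aj] .
          then show False using nz[OF i] nz[OF j] by blast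
        qed
      qed
    qed
  qed
  have cardU: "n \<le> card U"
  proof (rule ccontr)
    assume "\<not> n \<le> card U"
    then have lt: "card U < card {0..<n}" by simp
    then have n0: "0 < n" by simp
    have fz: "\<forall>i\<in>{0..<n}. \<forall>v. v \<notin> U \<longrightarrow> expo (w i) v = 0"
      unfolding U_def by (auto intro: expo_notin)
    obtain c where c: "\<exists>i\<in>{0..<n}. c i \<noteq> 0" "\<forall>v. (\<Sum>i\<in>{0..<n}. c i * expo (w i) v) = 0"
      using dep[OF finU _ lt fz] by blast
    define d1 where "d1 i = nat (c i)" for i
    define d2 where "d2 i = nat (- c i)" for i
    have psi_pos: "psi (raag_class ?VK ?EK p) = raag_class V E (concat (map (\<lambda>x. w (fst x)) p))"
      if "p \<noteq> []" "\<forall>x\<in>set p. snd x \<and> fst x < n" for p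
      using that
    proof (induction p)
      case Nil then show ?case by simp
    next
      case (Cons x p)
      obtain i where x: "x = (i,True)" "i < n" using Cons.prems by (cases x) auto
      have gi: "psi (raag_class ?VK ?EK [x]) = raag_class V E (w i)"
        using wprops(2)[OF x(2)] x(1) by (simp add: raag_gen_def)
      show ?case
      proof (cases "p = []")
        case True then show ?thesis using gi x by simp
      next
        case False
        have pw: "p \<in> words ?VK" using Cons.prems(2) unfolding words_iff VK by auto
        have "raag_class ?VK ?EK (x#p) = raag_class ?VK ?EK [x] \<otimes>\<^bsub>?K\<^esub> raag_class ?VK ?EK p"
          using mult_class[OF genw[OF x(2)] pw] x by simp
        then have "psi (raag_class ?VK ?EK (x#p)) = raag_class V E (w i) \<otimes>\<^bsub>?G\<^esub> raag_class V E (concat (map (\<lambda>x. w (fst x)) p))"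
          using psi_mult[OF carK[OF genw[OF x(2)]] carK[OF pw]] gi Cons.IH[OF False] Cons.prems(2) x
          by simp
        also have "\<dots> = raag_class V E (w i @ concat (map (\<lambda>x. w (fst x)) p))"
        proof (rule mult_class)
          show "w i \<in> words V" using wprops(1)[OF x(2)] .
          have "\<forall>y\<in>set p. w (fst y) \<in> words V"
          proof
            fix y assume "y \<in> set p"
            then have "fst y < n" using Cons.prems(2) by simp
            then show "w (fst y) \<in> words V" by (rule wprops(1))
          qed
          then show "concat (map (\<lambda>x. w (fst x)) p) \<in> words V"
            by (induction p) auto
        qed
        finally show ?thesis using x by simp
      qed
    qed
    let ?P = "\<lambda>d. concat (map (\<lambda>x. w (fst x)) (pK n d))"
    have P_psi: "psi (raag_class ?VK ?EK (pK n d)) = raag_class V E (?P d)" for d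
      using psi_pos[OF pK_nonempty] pK_pos[OF n0] by blast
    have P_set: "fst ` set (?P d) \<subseteq> U" for d
      using set_P[OF n0, of w d] unfolding U_def .
    have P_expo: "expo (?P d1) = expo (?P d2)"
    proof
      fix v
      have "expo (?P d1) v - expo (?P d2) v = (\<Sum>i\<in>{0..<n}. (int (d1 i) - int (d2 i)) * expo (w i) v)"
        unfolding expo_P by (simp add: sum_subtractf[symmetric] algebra_simps)
      also have "\<dots> = (\<Sum>i\<in>{0..<n}. c i * expo (w i) v)"
        by (rule sum.cong) (auto simp: d1_def d2_def)
      finally show "expo (?P d1) v = expo (?P d2) v" using c(2) by simp
    qed
    have "raag_eq V E (?P d1) (?P d2)"
      using clique_eq[OF clique UV P_set P_set P_expo] .
    then have "psi (raag_class ?VK ?EK (pK n d1)) = psi (raag_class ?VK ?EK (pK n d2))"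
      using P_psi class_eq by metis
    then have "raag_class ?VK ?EK (pK n d1) = raag_class ?VK ?EK (pK n d2)"
      using assms(3) carK pK_words[OF n0] VK unfolding inj_on_def by metis
    then have "raag_eq ?VK ?EK (pK n d2) (pK n d1)"
      using class_eqD pK_words[OF n0] VK by metis
    then have ee: "expo (pK n d2) = expo (pK n d1)" by (rule expo_eq)
    obtain i0 where i0: "i0 \<in> {0..<n}" "c i0 \<noteq> 0" using c(1) by blast
    have "expo (pK n d2) i0 = expo (pK n d1) i0" using ee by simp
    then have "int (d2 i0) = int (d1 i0)" using expo_pK[of i0 n] i0(1) by simp
    then show False using i0(2) by (simp add: d1_def d2_def split: if_splits)
  qed
  obtain iota where io: "iota ` {0..<n} \<subseteq> U" "inj_on iota {0..<n}"
    using card_le_inj[of "{0..<n}" U] finU cardU by auto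
  have "full_embedding ?VK ?EK V E iota"
    unfolding full_embedding_def graph_embedding_def VK
  proof (intro conjI ballI impI)
    show "inj_on iota {0..<n}" by (rule io(2))
    show "iota ` {0..<n} \<subseteq> V" using io(1) UV by blast
  next
    fix u v assume u: "u \<in> {0..<n}" and v: "v \<in> {0..<n}" and "Kn_adj n u v"
    then have "u \<noteq> v" by (simp add: Kn_adj_def)
    then have "iota u \<noteq> iota v" using io(2) u v unfolding inj_on_def by blast
    moreover have "iota u \<in> U" "iota v \<in> U" using io(1) u v by blast+
    ultimately show "E (iota u) (iota v)" using clique by blast
  next
    fix u v assume u: "u \<in> {0..<n}" and v: "v \<in> {0..<n}" and "\<not> Kn_adj n u v"
    then have "u = v" by (simp add: Kn_adj_def)
    then show "\<not> E (iota u) (iota v)" using Eirr by simp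
  qed
  moreover have "U \<subseteq> hom_supp ?VK psi ?VK ?EK"
  proof
    fix v assume "v \<in> U"
    then obtain i where i: "i < n" "v \<in> fst ` set (w i)" unfolding U_def by (metis UN_E atLeastLessThan_iff)
    then have "v \<in> raag_supp (?g i)" using wprops(4)[OF i(1)] by blast
    then show "v \<in> hom_supp ?VK psi ?VK ?EK" unfolding hom_supp_def VK using i(1) by auto
  qed
  ultimately show ?thesis using io(1) VK by blast
qed

end
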